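(* Let $\mathbb{F}$ be a field with $\mathrm{char}(\mathbb{F})\neq 2,3$, let $I$ be an ideal of $\hat{\mathcal{H}}$ with $I\subseteq J$, and let $x$ be a non-zero element of $I$ of minimal $J$-degree, with $p$-level $3k$. Then $x=\sum_{j\in 3\mathbb{N},\,j\le 3k}\beta_jp_{\bar1,j}$ for some $\beta_j\in\mathbb{F}$.
   Context: Notation: $\mathbb{N}=\{1,2,3,\dots\}$, $3\mathbb{N}=\{3,6,9,\dots\}$; for $r\in\mathbb{Z}$, $\bar r=r+3\mathbb{Z}\in\mathbb{Z}_3$. The algebra $\hat{\mathcal{H}}$ is the commutative $\mathbb{F}$-algebra with basis $\{a_i:i\in\mathbb{Z}\}\cup\{s_j:j\in\mathbb{N}\}\cup\{p_{\bar r,k}:\bar r\in\{\bar1,\bar2\},\ k\in 3\mathbb{N}\}$, where $s_0=0$, $p_{\bar r,j}=0$ for all $\bar r$ whenever $j\notin 3\mathbb{N}$, $p_{\bar 0,j}=-p_{\bar1,j}-p_{\bar2,j}$, $z_{\bar r,j}=p_{\bar r+\bar1,j}-p_{\bar r-\bar1,j}$, and for $i,i'\in\mathbb{Z}$, $j,l\in\mathbb{N}$, $h,k\in3\mathbb{N}$, $\bar r,\bar t\in\mathbb{Z}_3$: (H1) $a_ia_{i'}=\tfrac12(a_i+a_{i'})+s_{|i-i'|}+z_{\bar\imath,|i-i'|}$; (H2) $a_is_j=-\tfrac34a_i+\tfrac38(a_{i-j}+a_{i+j})+\tfrac32 s_j-z_{\bar\imath,j}$; (H3) $a_ip_{\bar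 r,k}=\tfrac32p_{\bar r,k}-p_{-(\bar\imath+\bar r),k}$; (H4) $s_js_l=\tfrac34(s_j+s_l)-\tfrac38(s_{|j-l|}+s_{j+l})$; (H5) $s_jp_{\bar r,k}=\tfrac34(p_{\bar r,j}+p_{\bar r,k})-\tfrac38(p_{\bar r,|j-k|}+p_{\bar r,j+k})$; (H6) $p_{\bar r,h}p_{\bar t,k}=\tfrac14(z_{-(\bar r+\bar t),h}+z_{-(\bar r+\bar t),k})-\tfrac18(z_{-(\bar r+\bar t),|h-k|}+z_{-(\bar r+\bar t),h+k})$. $J=\langle p_{\bar1,j},p_{\bar2,j}:j\in3\mathbb{N}\rangle$ (an ideal). Every non-zero $x\in J$ is uniquely $x=\sum_{j\in3\mathbb{N},\,j\le 3m}\sum_{\bar r\in\{\bar1,\bar2\}}\beta_{\bar r,j}p_{\bar r,j}$ with $\beta_{\bar r,3m}\neq0$ for some $\bar r$; its $p$-level is $3m$ and its $J$-degree is $3m+\sum_{r\in\{1,2\},\ \beta_{\bar r,3m}\neq0}\tfrac r4$. *)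

theory Defs
  imports Complex_Main
begin

text \<open>Basis indices of the algebra H-hat.  A i = a_i (i in Z), S j = s_j (j >= 1),
  P r k = p_{r,k} with r in {1,2} and k in 3N.  Indices outside these ranges
  are not basis elements (see hvalid).\<close>
datatype hb = A int | S nat | P nat nat

definition hvalid :: "hb \<Rightarrow> bool" where
  "hvalid b = (case b of A i \<Rightarrow> True | S j \<Rightarrow> 0 < j
      | P r k \<Rightarrow> (r = 1 \<or> r = 2) \<and> 0 < k \<and> 3 dvd k)"

text \<open>Elements of H-hat are coordinate functions w.r.t. the basis, finitely supported
  on valid indices.\<close>
type_synonym 'a hvec = "hb \<Rightarrow> 'a"

definition hcarrier :: "'a::field hvec set" where
  "hcarrier = {v. finite {b. v b \<noteq> 0} \<and> (\<forall>b. v b \<noteq> 0 \<longrightarrow> hvalid b)}"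

definition vzero :: "'a::field hvec" where "vzero = (\<lambda>b. 0)"
definition vadd :: "'a::field hvec \<Rightarrow> 'a hvec \<Rightarrow> 'a hvec" where
  "vadd u v = (\<lambda>b. u b + v b)"
definition vsub :: "'a::field hvec \<Rightarrow> 'a hvec \<Rightarrow> 'a hvec" where
  "vsub u v = (\<lambda>b. u b - v b)"
definition vscale :: "'a::field \<Rightarrow> 'a hvec \<Rightarrow> 'a hvec" where
  "vscale c v = (\<lambda>b. c * v b)"
definition vsum :: "('i \<Rightarrow> 'a::field hvec) \<Rightarrow> 'i set \<Rightarrow> 'a hvec" where
  "vsum f X = (\<lambda>b. \<Sum>i\<in>X. f i b)"

definition ebas :: "hb \<Rightarrow> 'a::field hvec" where
  "ebas b = (\<lambda>c. if c = b then 1 else 0)"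

text \<open>The generators with the conventions of the paper: s_0 = 0,
  p_{r,j} = 0 for j not in 3N, p_{0,j} = - p_{1,j} - p_{2,j}; the first index of p
  is an integer read modulo 3.\<close>
definition av :: "int \<Rightarrow> 'a::field hvec" where "av i = ebas (A i)"
definition sv :: "nat \<Rightarrow> 'a::field hvec" where
  "sv j = (if j = 0 then vzero else ebas (S j))"
definition pv :: "int \<Rightarrow> nat \<Rightarrow> 'a::field hvec" where
  "pv r j = (if 0 < j \<and> 3 dvd j then
      (if r mod 3 = 1 then ebas (P 1 j)
       else if r mod 3 = 2 then ebas (P 2 j)
       else vsub (vscale (-1) (ebas (P 1 j))) (ebas (P 2 j)))
     else vzero)"
definition zv :: "int \<Rightarrow> nat \<Rightarrow> 'a::field hvec" where
  "zv r j = vsub (pv (r + 1) j) (pv (r - 1) j)"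

definition adist :: "int \<Rightarrow> int \<Rightarrow> nat" where "adist i i' = nat \<bar>i - i'\<bar>"
definition ndist :: "nat \<Rightarrow> nat \<Rightarrow> nat" where "ndist j l = nat \<bar>int j - int l\<bar>"

text \<open>Products of basis elements, (H1)-(H6) and commutativity.\<close>
fun bprod :: "hb \<Rightarrow> hb \<Rightarrow> 'a::field hvec" where
  "bprod (A i) (A i') = vadd (vadd (vscale (1/2) (vadd (av i) (av i'))) (sv (adist i i')))
        (zv i (adist i i'))"
| "bprod (A i) (S j) = vadd (vadd (vadd (vscale (-3/4) (av i))
        (vscale (3/8) (vadd (av (i - int j)) (av (i + int j)))))
        (vscale (3/2) (sv j))) (vscale (-1) (zv i j))"
| "bprod (S j) (A i) = vadd (vadd (vadd (vscale (-3/4) (av i))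
        (vscale (3/8) (vadd (av (i - int j)) (av (i + int j)))))
        (vscale (3/2) (sv j))) (vscale (-1) (zv i j))"
| "bprod (A i) (P r k) = vsub (vscale (3/2) (pv (int r) k)) (pv (- (i + int r)) k)"
| "bprod (P r k) (A i) = vsub (vscale (3/2) (pv (int r) k)) (pv (- (i + int r)) k)"
| "bprod (S j) (S l) = vsub (vscale (3/4) (vadd (sv j) (sv l)))
        (vscale (3/8) (vadd (sv (ndist j l)) (sv (j + l))))"
| "bprod (S j) (P r k) = vsub (vscale (3/4) (vadd (pv (int r) j) (pv (int r) k)))
        (vscale (3/8) (vadd (pv (int r) (ndist j k)) (pv (int r) (j + k))))"
| "bprod (P r k) (S j) = vsub (vscale (3/4) (vadd (pv (int r) j) (pv (int r) k)))
        (vscale (3/8) (vadd (pv (int r) (ndist j k)) (pv (int r) (j + k))))"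
| "bprod (P r h) (P t k) = vsub (vscale (1/4) (vadd (zv (- (int r + int t)) h) (zv (- (int r + int t)) k)))
        (vscale (1/8) (vadd (zv (- (int r + int t)) (ndist h k)) (zv (- (int r + int t)) (h + k))))"

definition hmult :: "'a::field hvec \<Rightarrow> 'a hvec \<Rightarrow> 'a hvec" where
  "hmult x y = vsum (\<lambda>b. vsum (\<lambda>c. vscale (x b * y c) (bprod b c)) {c. y c \<noteq> 0}) {b. x b \<noteq> 0}"

definition hideal :: "'a::field hvec set \<Rightarrow> bool" where
  "hideal I \<longleftrightarrow> I \<subseteq> hcarrier \<and> vzero \<in> I
     \<and> (\<forall>u\<in>I. \<forall>v\<in>I. vadd u v \<in> I)
     \<and> (\<forall>c. \<forall>u\<in>I. vscale c u \<in> I)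
     \<and> (\<forall>h\<in>hcarrier. \<forall>u\<in>I. hmult h u \<in> I)"

definition Jideal :: "'a::field hvec set" where
  "Jideal = \<Inter>{I. hideal I \<and> (\<forall>j. 0 < j \<and> 3 dvd j \<longrightarrow> pv 1 j \<in> I \<and> pv 2 j \<in> I)}"

definition plevel :: "'a::field hvec \<Rightarrow> nat" where
  "plevel x = Max {j. x (P 1 j) \<noteq> 0 \<or> x (P 2 j) \<noteq> 0}"

definition Jdegree :: "'a::field hvec \<Rightarrow> real" where
  "Jdegree x = real (plevel x)
     + (if x (P 1 (plevel x)) \<noteq> 0 then 1/4 else 0)
     + (if x (P 2 (plevel x)) \<noteq> 0 then 2/4 else 0)"

end

theory Submission
  imports Defs
begin

lemma pv_supp: "(pv r j c :: 'a::field) \<noteq> 0 \<Longrightarrow> (c = P 1 j \<or> c = P 2 j) \<and> 0 < j \<and> 3 dvd j"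
  by (auto simp: pv_def ebas_def vsub_def vscale_def vzero_def split: if_splits)

lemma zv_supp:
  fixes r :: int and j :: nat and c :: hb
  assumes n: "(zv r j c :: 'a::field) \<noteq> 0"
  shows "(c = P 1 j \<or> c = P 2 j) \<and> 0 < j \<and> 3 dvd j"
proof -
  have e: "zv r j c = pv (r+1) j c - (pv (r-1) j c :: 'a)" by (simp add: zv_def vsub_def)
  have "pv (r+1) j c \<noteq> (0::'a) \<or> pv (r-1) j c \<noteq> (0::'a)"
  proof (rule ccontr)
    assume "\<not> ?thesis"
    then have z1: "pv (r+1) j c = (0::'a)" and z2: "pv (r-1) j c = (0::'a)" by auto
    have "zv r j c = (0::'a)" unfolding e z1 z2 by simp
    with n show False by simp
  qed
  then show ?thesis using pv_supp by blast
qed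

definition Good :: "nat \<Rightarrow> hb set" where
  "Good N = {P r k | r k. (r = 1 \<or> r = 2) \<and> 0 < k \<and> 3 dvd k \<and> k \<le> N}"

lemma pv_Good: "(pv r j c :: 'a::field) \<noteq> 0 \<Longrightarrow> j \<le> N \<Longrightarrow> c \<in> Good N"
  using pv_supp[of r j c] by (auto simp: Good_def)

lemma zv_Good: "(zv r j c :: 'a::field) \<noteq> 0 \<Longrightarrow> j \<le> N \<Longrightarrow> c \<in> Good N"
  using zv_supp[of r j c] by (auto simp: Good_def)

lemma Good_finite: "finite (Good N)"
proof -
  have "Good N \<subseteq> (\<lambda>(r,k). P r k) ` ({1,2} \<times> {..N})"
    by (auto simp: Good_def)
  then show ?thesis by (rule finite_subset) auto
qed

fun bsz :: "hb \<Rightarrow> nat" where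
  "bsz (A i) = 0" | "bsz (S j) = j" | "bsz (P r h) = h"

lemma ndist_le: "ndist j k \<le> j + k" by (simp add: ndist_def)

lemma bprod_Good:
  assumes "(bprod b (P r k) c :: 'a::field) \<noteq> 0"
  shows "c \<in> Good (bsz b + k)"
proof (cases b)
  case (A i)
  have e: "bprod b (P r k) c = (3/2::'a) * pv (int r) k c - pv (- (i + int r)) k c"
    using A by (simp add: vsub_def vscale_def)
  have "pv (int r) k c \<noteq> (0::'a) \<or> pv (- (i + int r)) k c \<noteq> (0::'a)"
  proof (rule ccontr)
    assume "\<not> ?thesis"
    then have "bprod (A i) (P r k) c = (0::'a)" using e A by simp
    with assms A show False by simp
  qed
  then show ?thesis using A pv_Good[of _ k c "bsz b + k"] by auto
next
  case (S j)
  have e: "bprod b (P r k) c = (3/4::'a) * (pv (int r) j c + pv (int r) k c)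
     - 3/8 * (pv (int r) (ndist j k) c + pv (int r) (j+k) c)"
    by (simp add: S vsub_def vscale_def vadd_def)
  have "pv (int r) j c \<noteq> (0::'a) \<or> pv (int r) k c \<noteq> (0::'a) \<or> pv (int r) (ndist j k) c \<noteq> (0::'a)
        \<or> pv (int r) (j+k) c \<noteq> (0::'a)"
  proof (rule ccontr)
    assume "\<not> ?thesis"
    then have "bprod b (P r k) c = (0::'a)" unfolding e by simp
    with assms show False by simp
  qed
  then show ?thesis using S pv_Good[of "int r" _ c "j + k"] ndist_le[of j k]
    by auto
next
  case (P t h)
  have e: "bprod b (P r k) c = (1/4::'a) * (zv (- (int t + int r)) h c + zv (- (int t + int r)) k c)
     - 1/8 * (zv (- (int t + int r)) (ndist h k) c + zv (- (int t + int r)) (h+k) c)"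
    by (simp add: P vsub_def vscale_def vadd_def)
  have "zv (- (int t + int r)) h c \<noteq> (0::'a) \<or> zv (- (int t + int r)) k c \<noteq> (0::'a)
     \<or> zv (- (int t + int r)) (ndist h k) c \<noteq> (0::'a)
        \<or> zv (- (int t + int r)) (h+k) c \<noteq> (0::'a)"
  proof (rule ccontr)
    assume "\<not> ?thesis"
    then have "bprod b (P r k) c = (0::'a)" unfolding e by simp
    with assms show False by simp
  qed
  then show ?thesis using P zv_Good[of "- (int t + int r)" _ c "h + k"] ndist_le[of h k]
    by auto
qed

lemma bprodA_supp:
  assumes "(bprod (A i) (P r k) c :: 'a::field) \<noteq> 0"
  shows "c = P 1 k \<or> c = P 2 k"
proof -
  have e: "bprod (A i) (P r k) c = (3/2::'a) * pv (int r) k c - pv (- (i + int r)) k c"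
    by (simp add: vsub_def vscale_def)
  have "pv (int r) k c \<noteq> (0::'a) \<or> pv (- (i + int r)) k c \<noteq> (0::'a)"
  proof (rule ccontr)
    assume "\<not> ?thesis"
    then have "bprod (A i) (P r k) c = (0::'a)" using e by simp
    with assms show False by simp
  qed
  then show ?thesis using pv_supp by blast
qed

definition Psp :: "'a::field hvec set" where
  "Psp = {v. v \<in> hcarrier \<and> (\<forall>b. v b \<noteq> 0 \<longrightarrow> (\<exists>r k. b = P r k))}"

fun kof :: "hb \<Rightarrow> nat" where
  "kof (P r k) = k" | "kof (A i) = 0" | "kof (S j) = 0"

lemma sum_nz: "sum f X \<noteq> 0 \<Longrightarrow> \<exists>x\<in>X. f x \<noteq> 0"
  by (meson sum.neutral)

lemma hmult_supp:
  fixes h u :: "'a::field hvec"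
  assumes u: "u \<in> Psp" and nz: "hmult h u c \<noteq> 0"
  shows "\<exists>b\<in>{b. h b \<noteq> 0}. \<exists>c'\<in>{c. u c \<noteq> 0}. c \<in> Good (bsz b + kof c')"
proof -
  have "hmult h u c = (\<Sum>b\<in>{b. h b \<noteq> 0}. \<Sum>c'\<in>{c. u c \<noteq> 0}. (h b * u c') * bprod b c' c)"
    by (simp add: hmult_def vsum_def vscale_def)
  with nz obtain b c' where b: "b \<in> {b. h b \<noteq> 0}" and c': "c' \<in> {c. u c \<noteq> 0}"
    and t: "(h b * u c') * bprod b c' c \<noteq> 0"
    by (metis (no_types, lifting) sum_nz)
  from c' u obtain r k where ck: "c' = P r k" by (auto simp: Psp_def)
  from t have "bprod b (P r k) c \<noteq> (0::'a)" using ck by auto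
  then have "c \<in> Good (bsz b + k)" by (rule bprod_Good)
  then have "c \<in> Good (bsz b + kof c')" using ck by simp
  then show ?thesis using b c' by blast
qed

lemma hideal_Psp: "hideal (Psp :: 'a::field hvec set)"
proof -
  have A: "vzero \<in> (Psp :: 'a hvec set)"
    by (simp add: Psp_def hcarrier_def vzero_def)
  have B: "vadd u v \<in> Psp" if "u \<in> Psp" "v \<in> Psp" for u v :: "'a hvec"
  proof -
    have "{b. vadd u v b \<noteq> 0} \<subseteq> {b. u b \<noteq> 0} \<union> {b. v b \<noteq> 0}"
      by (auto simp: vadd_def)
    moreover have "finite ({b. u b \<noteq> 0} \<union> {b. v b \<noteq> 0})"
      using that by (simp add: Psp_def hcarrier_def)
    ultimately have "finite {b. vadd u v b \<noteq> 0}" by (rule finite_subset)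
    moreover have "hvalid b \<and> (\<exists>r k. b = P r k)" if "vadd u v b \<noteq> 0" for b
    proof -
      have "u b \<noteq> 0 \<or> v b \<noteq> 0" using that by (auto simp: vadd_def)
      then show ?thesis using \<open>u \<in> Psp\<close> \<open>v \<in> Psp\<close> by (auto simp: Psp_def hcarrier_def)
    qed
    ultimately show ?thesis by (simp add: Psp_def hcarrier_def)
  qed
  have C: "vscale c u \<in> Psp" if "u \<in> Psp" for u :: "'a hvec" and c
  proof -
    have "{b. vscale c u b \<noteq> 0} \<subseteq> {b. u b \<noteq> 0}"
      by (auto simp: vscale_def)
    moreover have "finite {b. u b \<noteq> 0}"
      using that by (simp add: Psp_def hcarrier_def)
    ultimately have "finite {b. vscale c u b \<noteq> 0}" by (rule finite_subset)
    moreover have "hvalid b \<and> (\<exists>r k. b = P r k)" if "vscale c u b \<noteq> 0" for b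
    proof -
      have "u b \<noteq> 0" using that by (auto simp: vscale_def)
      then show ?thesis using \<open>u \<in> Psp\<close> by (auto simp: Psp_def hcarrier_def)
    qed
    ultimately show ?thesis by (simp add: Psp_def hcarrier_def)
  qed
  have D: "hmult h u \<in> Psp" if h: "h \<in> hcarrier" and u: "u \<in> Psp" for h u :: "'a hvec"
  proof -
    have sub: "{c. hmult h u c \<noteq> 0} \<subseteq> (\<Union>b\<in>{b. h b \<noteq> 0}. \<Union>c'\<in>{c. u c \<noteq> 0}. Good (bsz b + kof c'))"
    proof
      fix c assume "c \<in> {c. hmult h u c \<noteq> 0}"
      then obtain b c' where "b\<in>{b. h b \<noteq> 0}" "c'\<in>{c. u c \<noteq> 0}" "c \<in> Good (bsz b + kof c')"
        using hmult_supp[OF u] by blast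
      then show "c \<in> (\<Union>b\<in>{b. h b \<noteq> 0}. \<Union>c'\<in>{c. u c \<noteq> 0}. Good (bsz b + kof c'))" by blast
    qed
    have fin: "finite {c. hmult h u c \<noteq> 0}"
      apply (rule finite_subset[OF sub])
      apply (intro finite_UN_I Good_finite)
      using h u by (simp_all add: hcarrier_def Psp_def)
    have "hvalid c \<and> (\<exists>r k. c = P r k)" if "hmult h u c \<noteq> 0" for c
      using hmult_supp[OF u that] by (auto simp: Good_def hvalid_def)
    then show ?thesis using fin by (auto simp: Psp_def hcarrier_def)
  qed
  have E: "Psp \<subseteq> (hcarrier :: 'a hvec set)" by (auto simp: Psp_def)
  show ?thesis
    apply (unfold hideal_def)
    apply (intro conjI E A ballI allI)
      apply (rule B; assumption)
     apply (rule C; assumption)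
    apply (rule D; assumption)
    done
qed

lemma ebas_Psp: "(r = 1 \<or> r = 2) \<Longrightarrow> 0 < j \<Longrightarrow> 3 dvd j \<Longrightarrow> (ebas (P r j) :: 'a::field hvec) \<in> Psp"
proof -
  assume a: "r = 1 \<or> r = 2" "0 < j" "3 dvd j"
  have "{b. (ebas (P r j) :: 'a hvec) b \<noteq> 0} = {P r j}" by (auto simp: ebas_def)
  then show ?thesis using a by (auto simp: Psp_def hcarrier_def hvalid_def ebas_def)
qed

lemma Jideal_Psp: "(Jideal :: 'a::field hvec set) \<subseteq> Psp"
proof -
  have "pv 1 j \<in> (Psp :: 'a hvec set) \<and> pv 2 j \<in> (Psp :: 'a hvec set)" if "0 < j" "3 dvd j" for j
  proof -
    have "pv 1 j = (ebas (P 1 j) :: 'a hvec)" "pv 2 j = (ebas (P 2 j) :: 'a hvec)"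
      using that by (simp_all add: pv_def)
    then show ?thesis using that ebas_Psp[of 1 j] ebas_Psp[of 2 j] by simp
  qed
  then have "Psp \<in> {I. hideal I \<and> (\<forall>j. 0 < j \<and> 3 dvd j \<longrightarrow> pv 1 j \<in> I \<and> pv 2 j \<in> (I :: 'a hvec set))}"
    using hideal_Psp by blast
  then show ?thesis unfolding Jideal_def by (rule Inter_lower)
qed

lemma Psp_val:
  assumes "x \<in> Psp" "x b \<noteq> 0"
  shows "\<exists>r k. b = P r k \<and> (r = 1 \<or> r = 2) \<and> 0 < k \<and> 3 dvd k"
proof -
  from assms obtain r k where b: "b = P r k" by (auto simp: Psp_def)
  have "hvalid b" using assms by (auto simp: Psp_def hcarrier_def)
  then show ?thesis using b by (simp add: hvalid_def)
qed

lemma Psp_finite: "x \<in> Psp \<Longrightarrow> finite {b. x b \<noteq> 0}"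
  by (simp add: Psp_def hcarrier_def)

lemma av_carrier: "(av i :: 'a::field hvec) \<in> hcarrier"
proof -
  have "{b. (av i :: 'a hvec) b \<noteq> 0} = {A i}" by (auto simp: av_def ebas_def)
  then show ?thesis by (auto simp: hcarrier_def hvalid_def av_def ebas_def)
qed

lemma hmult_av:
  fixes x :: "'a::field hvec"
  shows "hmult (av i) x c = (\<Sum>c'\<in>{c. x c \<noteq> 0}. x c' * bprod (A i) c' c)"
proof -
  have "{b. (av i :: 'a hvec) b \<noteq> 0} = {A i}" by (auto simp: av_def ebas_def)
  then show ?thesis by (simp add: hmult_def vsum_def vscale_def av_def ebas_def)
qed

lemma hmult_av_P:
  fixes x :: "'a::field hvec"
  assumes xP: "x \<in> Psp"
  shows "hmult (av i) x (P r j) = x (P 1 j) * bprod (A i) (P 1 j) (P r j)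
           + x (P 2 j) * bprod (A i) (P 2 j) (P r j)"
proof -
  define f where "f c' = x c' * bprod (A i) c' (P r j)" for c'
  define T where "T = {P 1 j, P 2 j}"
  define Sx where "Sx = {c. x c \<noteq> 0}"
  have fin: "finite (Sx \<union> T)" using Psp_finite[OF xP] by (simp add: Sx_def T_def)
  have z1: "\<forall>c'\<in>(Sx \<union> T) - Sx. f c' = 0" by (auto simp: f_def Sx_def)
  have z2: "\<forall>c'\<in>(Sx \<union> T) - T. f c' = 0"
  proof
    fix c' assume c': "c' \<in> (Sx \<union> T) - T"
    show "f c' = 0"
    proof (rule ccontr)
      assume nz: "f c' \<noteq> 0"
      then have "x c' \<noteq> 0" by (auto simp: f_def)
      then obtain r' k where ck: "c' = P r' k" "r' = 1 \<or> r' = 2" using Psp_val[OF xP] by blast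
      have "bprod (A i) (P r' k) (P r j) \<noteq> (0::'a)" using nz ck by (auto simp: f_def)
      then have "P r j = P 1 k \<or> P r j = P 2 k" by (rule bprodA_supp)
      then have "k = j" by auto
      then show False using c' ck by (auto simp: T_def)
    qed
  qed
  have "hmult (av i) x (P r j) = sum f Sx" by (simp add: hmult_av f_def Sx_def)
  also have "\<dots> = sum f (Sx \<union> T)" by (rule sum.mono_neutral_left[OF fin _ z1]) auto
  also have "\<dots> = sum f T" by (rule sum.mono_neutral_right[OF fin _ z2]) auto
  also have "\<dots> = f (P 1 j) + f (P 2 j)" by (simp add: T_def)
  finally show ?thesis by (simp add: f_def)
qed

lemma Psp_invalid:
  assumes "x \<in> Psp" "\<not> (0 < j \<and> 3 dvd j)"
  shows "x (P r j) = 0"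
  using Psp_val[OF assms(1), of "P r j"] assms(2) by auto

lemma comp_a1:
  fixes x :: "'a::field hvec"
  assumes xP: "x \<in> Psp" and c2: "(2::'a) \<noteq> 0"
  shows "hmult (av 1) x (P 1 j) = x (P 1 j) / 2 + x (P 2 j)"
    and "hmult (av 1) x (P 2 j) = 5/2 * x (P 2 j)"
proof -
  have "hmult (av 1) x (P 1 j) = x (P 1 j) / 2 + x (P 2 j) \<and> hmult (av 1) x (P 2 j) = 5/2 * x (P 2 j)"
  proof (cases "0 < j \<and> 3 dvd j")
    case True
    then show ?thesis using c2
      by (simp add: hmult_av_P[OF xP] pv_def ebas_def vsub_def vscale_def field_simps)
  next
    case False
    then show ?thesis using Psp_invalid[OF xP False]
      by (simp add: hmult_av_P[OF xP])
  qed
  then show "hmult (av 1) x (P 1 j) = x (P 1 j) / 2 + x (P 2 j)"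
    and "hmult (av 1) x (P 2 j) = 5/2 * x (P 2 j)" by auto
qed

lemma comp_a0:
  fixes x :: "'a::field hvec"
  assumes xP: "x \<in> Psp" and c2: "(2::'a) \<noteq> 0"
  shows "hmult (av 0) x (P 1 j) = 3/2 * x (P 1 j) - x (P 2 j)"
    and "hmult (av 0) x (P 2 j) = 3/2 * x (P 2 j) - x (P 1 j)"
proof -
  have "hmult (av 0) x (P 1 j) = 3/2 * x (P 1 j) - x (P 2 j) \<and> hmult (av 0) x (P 2 j) = 3/2 * x (P 2 j) - x (P 1 j)"
  proof (cases "0 < j \<and> 3 dvd j")
    case True
    then show ?thesis using c2
      by (simp add: hmult_av_P[OF xP] pv_def ebas_def vsub_def vscale_def field_simps)
  next
    case False
    then show ?thesis using Psp_invalid[OF xP False]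
      by (simp add: hmult_av_P[OF xP])
  qed
  then show "hmult (av 0) x (P 1 j) = 3/2 * x (P 1 j) - x (P 2 j)"
    and "hmult (av 0) x (P 2 j) = 3/2 * x (P 2 j) - x (P 1 j)" by auto
qed

lemma Jdeg_upper: "Jdegree y \<le> real (plevel y) + 3/4"
  by (simp add: Jdegree_def)

lemma Jdeg_upper2: "y (P 2 (plevel y)) = 0 \<Longrightarrow> Jdegree y \<le> real (plevel y) + 1/4"
  by (simp add: Jdegree_def)

lemma Jdeg_lower: "real (plevel y) \<le> Jdegree y"
  by (simp add: Jdegree_def)

theorem lemma7p4:
  fixes I :: "'a::field hvec set" and x :: "'a hvec" and k :: nat
  assumes char2: "(2::'a) \<noteq> 0" and char3: "(3::'a) \<noteq> 0"
    and I: "hideal I" and IJ: "I \<subseteq> Jideal"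
    and xI: "x \<in> I" and xnz: "x \<noteq> vzero"
    and xmin: "\<forall>y\<in>I. y \<noteq> vzero \<longrightarrow> Jdegree x \<le> Jdegree y"
    and lev: "plevel x = 3 * k"
  shows "\<exists>\<beta>::nat \<Rightarrow> 'a. x = vsum (\<lambda>j. vscale (\<beta> j) (pv 1 j)) {j. 0 < j \<and> 3 dvd j \<and> j \<le> 3 * k}"
proof -
  define K where "K = 3 * k"
  have char4: "(4::'a) \<noteq> 0" using char2 by (metis mult_2_right no_zero_divisors numeral_Bit0)
  have xP: "x \<in> Psp" using xI IJ Jideal_Psp by blast
  have Iadd: "\<And>u v. u \<in> I \<Longrightarrow> v \<in> I \<Longrightarrow> vadd u v \<in> I"
    and Iscale: "\<And>c u. u \<in> I \<Longrightarrow> vscale c u \<in> I"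
    and Imult: "\<And>h u. h \<in> hcarrier \<Longrightarrow> u \<in> I \<Longrightarrow> hmult h u \<in> I"
    using I unfolding hideal_def by blast+
  have comb: "vadd (hmult (av i) x) (vscale c x) \<in> I" for i c
    by (intro Iadd Iscale Imult av_carrier xI)
  have Ju: "y \<in> I \<Longrightarrow> y \<noteq> vzero \<Longrightarrow> Jdegree x \<le> Jdegree y" for y using xmin by blast
  have nzv: "y \<noteq> vzero" if "y b \<noteq> 0" for y :: "'a hvec" and b
    using that by (auto simp: vzero_def)
  define L where "L = {j. x (P 1 j) \<noteq> 0 \<or> x (P 2 j) \<noteq> 0}"
  have Lsub: "L \<subseteq> kof ` {b. x b \<noteq> 0}"
  proof
    fix j assume "j \<in> L"
    then have "x (P 1 j) \<noteq> 0 \<or> x (P 2 j) \<noteq> 0" by (simp add: L_def)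
    then show "j \<in> kof ` {b. x b \<noteq> 0}"
    proof
      assume "x (P 1 j) \<noteq> 0" then show ?thesis by (intro image_eqI[of _ _ "P 1 j"]) auto
    next
      assume "x (P 2 j) \<noteq> 0" then show ?thesis by (intro image_eqI[of _ _ "P 2 j"]) auto
    qed
  qed
  have Lfin: "finite L" using Lsub Psp_finite[OF xP] finite_surj by blast
  have Lne: "L \<noteq> {}"
  proof -
    obtain b where "x b \<noteq> 0" using xnz by (auto simp: vzero_def)
    then obtain r m where "b = P r m" "r = 1 \<or> r = 2" using Psp_val[OF xP] by blast
    then have "m \<in> L" using \<open>x b \<noteq> 0\<close> by (auto simp: L_def)
    then show ?thesis by blast
  qed
  have KL: "K = Max L" using lev by (simp add: K_def L_def plevel_def)
  have KinL: "K \<in> L" using KL Lfin Lne by simp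
  have aboveK: "j \<in> L \<Longrightarrow> j \<le> K" for j using KL Lfin by simp
  have zeroK: "K < j \<Longrightarrow> x (P 1 j) = 0 \<and> x (P 2 j) = 0" for j
    using aboveK[of j] by (auto simp: L_def)
  have Jx: "Jdegree x = real K + (if x (P 1 K) \<noteq> 0 then 1/4 else 0) + (if x (P 2 K) \<noteq> 0 then 2/4 else 0)"
    using lev by (simp add: Jdegree_def K_def)
  have plev_le: "plevel y \<le> N" if "finite {j. y (P 1 j) \<noteq> 0 \<or> y (P 2 j) \<noteq> 0}"
     "j0 \<in> {j. y (P 1 j) \<noteq> 0 \<or> y (P 2 j) \<noteq> 0}"
     "\<And>j. j \<in> {j. y (P 1 j) \<noteq> 0 \<or> y (P 2 j) \<noteq> 0} \<Longrightarrow> j \<le> N" for y :: "'a hvec" and N j0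
    unfolding plevel_def using that by (subst Max_le_iff) auto
  have x2zero: "x (P 2 j) = 0" for j
  proof (cases "x (P 2 K) = 0")
    case True
    show ?thesis
    proof (rule ccontr)
      assume j0: "x (P 2 j) \<noteq> 0"
      define y where "y = vadd (hmult (av 1) x) (vscale (-1/2) x)"
      have y1: "y (P 1 m) = x (P 2 m)" and y2: "y (P 2 m) = 2 * x (P 2 m)" for m
        unfolding y_def vadd_def vscale_def comp_a1[OF xP char2]
        using char2 char4 by (simp_all add: field_simps)
      have yI: "y \<in> I" unfolding y_def by (rule comb)
      have ynz: "y \<noteq> vzero" using y1[of j] j0 by (intro nzv[of y "P 1 j"]) simp
      have Ly: "{m. y (P 1 m) \<noteq> 0 \<or> y (P 2 m) \<noteq> 0} = {m. x (P 2 m) \<noteq> 0}"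
      proof -
        have "\<forall>m. (y (P 1 m) \<noteq> 0 \<or> y (P 2 m) \<noteq> 0) = (x (P 2 m) \<noteq> 0)"
          unfolding y1 y2 using char2 by simp
        then show ?thesis by blast
      qed
      have Lyfin: "finite {m. x (P 2 m) \<noteq> 0}"
        by (rule finite_subset[OF _ Lfin]) (auto simp: L_def)
      have K1: "j < K"
      proof -
        have "j \<le> K" using aboveK[of j] j0 by (simp add: L_def)
        moreover have "j \<noteq> K" using True j0 by auto
        ultimately show ?thesis by simp
      qed
      have "plevel y \<le> K - 1"
      proof (rule plev_le)
        show "finite {j. y (P 1 j) \<noteq> 0 \<or> y (P 2 j) \<noteq> 0}" using Ly Lyfin by simp
        show "j \<in> {j. y (P 1 j) \<noteq> 0 \<or> y (P 2 j) \<noteq> 0}" using Ly j0 by simp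
        fix m assume "m \<in> {j. y (P 1 j) \<noteq> 0 \<or> y (P 2 j) \<noteq> 0}"
        then have m0: "x (P 2 m) \<noteq> 0" using Ly by blast
        then have "m \<le> K" using aboveK[of m] by (simp add: L_def)
        moreover have "m \<noteq> K" using True m0 by auto
        ultimately show "m \<le> K - 1" by simp
      qed
      then have "real (plevel y) \<le> real K - 1" using K1 by linarith
      then have "Jdegree y < real K" using Jdeg_upper[of y] by linarith
      moreover have "real K \<le> Jdegree x" using Jdeg_lower[of x] lev by (simp add: K_def)
      moreover have "Jdegree x \<le> Jdegree y" using Ju[OF yI ynz] .
      ultimately show False by linarith
    qed
  next
    case False
    have JxB: "real K + 1/2 \<le> Jdegree x" using Jx False by simp
    have rel: "x (P 2 m) = 2 * x (P 1 m)" for m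
    proof (rule ccontr)
      assume j0: "x (P 2 m) \<noteq> 2 * x (P 1 m)"
      define y where "y = vadd (hmult (av 1) x) (vscale (-5/2) x)"
      have y1: "y (P 1 n) = x (P 2 n) - 2 * x (P 1 n)" and y2: "y (P 2 n) = 0" for n
        unfolding y_def vadd_def vscale_def comp_a1[OF xP char2]
        using char2 char4 by (simp_all add: field_simps)
      have yI: "y \<in> I" unfolding y_def by (rule comb)
      have ynz: "y \<noteq> vzero" using y1[of m] j0 by (intro nzv[of y "P 1 m"]) simp
      have Ly: "{n. y (P 1 n) \<noteq> 0 \<or> y (P 2 n) \<noteq> 0} \<subseteq> L"
        unfolding y1 y2 L_def by auto
      have "plevel y \<le> K"
      proof (rule plev_le)
        show "finite {j. y (P 1 j) \<noteq> 0 \<or> y (P 2 j) \<noteq> 0}" using Ly Lfin finite_subset by blast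
        show "m \<in> {j. y (P 1 j) \<noteq> 0 \<or> y (P 2 j) \<noteq> 0}" using y1[of m] j0 by simp
        fix n assume "n \<in> {j. y (P 1 j) \<noteq> 0 \<or> y (P 2 j) \<noteq> 0}"
        then show "n \<le> K" using Ly aboveK by blast
      qed
      then have "Jdegree y \<le> real K + 1/4" using Jdeg_upper2[of y] y2 by fastforce
      moreover have "Jdegree x \<le> Jdegree y" using Ju[OF yI ynz] .
      ultimately show False using JxB by linarith
    qed
    have x1K: "x (P 1 K) \<noteq> 0" using False rel[of K] by auto
    have JxB2: "Jdegree x = real K + 3/4" using Jx False x1K by simp
    define z where "z = vadd (hmult (av 0) x) (vscale (1/2) x)"
    have z1: "z (P 1 n) = 0" and z2: "z (P 2 n) = 3 * x (P 1 n)" for n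
      unfolding z_def vadd_def vscale_def comp_a0[OF xP char2]
      using char2 char4 rel[of n] by (simp_all add: field_simps)
    have zI: "z \<in> I" unfolding z_def by (rule comb)
    have znz: "z \<noteq> vzero" using z2[of K] x1K char3 by (intro nzv[of z "P 2 K"]) simp
    have Lz: "{n. z (P 1 n) \<noteq> 0 \<or> z (P 2 n) \<noteq> 0} \<subseteq> L"
      unfolding z1 z2 L_def using char3 by auto
    have KLz: "K \<in> {n. z (P 1 n) \<noteq> 0 \<or> z (P 2 n) \<noteq> 0}" unfolding z2 using x1K char3 by simp
    have pz: "plevel z = K"
      unfolding plevel_def
      by (rule Max_eqI) (use Lz Lfin finite_subset KLz aboveK in auto)
    have "Jdegree z = real K + 1/2" unfolding Jdegree_def pz z1 z2 using x1K char3 by simp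
    moreover have "Jdegree x \<le> Jdegree z" using Ju[OF zI znz] .
    ultimately have False using JxB2 by linarith
    then show ?thesis ..
  qed
  define Js where "Js = {j. 0 < j \<and> 3 dvd j \<and> j \<le> 3 * k}"
  have Jsfin: "finite Js" by (rule finite_subset[of _ "{..3*k}"]) (auto simp: Js_def)
  show ?thesis
  proof (intro exI[of _ "\<lambda>j. x (P 1 j)"] ext)
    fix b
    have rhs: "vsum (\<lambda>j. vscale (x (P 1 j)) (pv 1 j)) Js b = (\<Sum>j\<in>Js. if b = P 1 j then x (P 1 j) else 0)"
      unfolding vsum_def vscale_def
      by (rule sum.cong) (auto simp: Js_def pv_def ebas_def)
    have "x b = (\<Sum>j\<in>Js. if b = P 1 j then x (P 1 j) else 0)"
    proof (cases b)
      case (P r m)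
      show ?thesis
      proof (cases "r = 1")
        case True
        have "(\<Sum>j\<in>Js. if b = P 1 j then x (P 1 j) else 0) = (\<Sum>j\<in>Js. if m = j then x (P 1 j) else 0)"
          by (rule sum.cong) (auto simp: P True)
        also have "\<dots> = (if m \<in> Js then x (P 1 m) else 0)" using Jsfin by simp
        also have "\<dots> = x (P 1 m)"
        proof (cases "m \<in> Js")
          case False
          show ?thesis
          proof (cases "0 < m \<and> 3 dvd m")
            case True
            then have "K < m" using False by (auto simp: Js_def K_def)
            then show ?thesis using zeroK False by simp
          next
            case False2: False
            then show ?thesis using Psp_invalid[OF xP False2] False by simp
          qed
        qed simp
        finally show ?thesis by (simp add: P True)
      next
        case r1: False
        have "(\<Sum>j\<in>Js. if b = P 1 j then x (P 1 j) else 0) = 0"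
          by (rule sum.neutral) (use r1 in \<open>auto simp: P\<close>)
        moreover have "x b = 0"
        proof (rule ccontr)
          assume "x b \<noteq> 0"
          then obtain r' m' where "b = P r' m'" "r' = 1 \<or> r' = 2" using Psp_val[OF xP] by blast
          then show False using r1 x2zero \<open>x b \<noteq> 0\<close> P by auto
        qed
        ultimately show ?thesis by simp
      qed
    next
      case (A i)
      have "x b = 0" using Psp_val[OF xP, of b] A by (cases "x b = 0") auto
      then show ?thesis by (simp add: A)
    next
      case (S i)
      have "x b = 0" using Psp_val[OF xP, of b] S by (cases "x b = 0") auto
      then show ?thesis by (simp add: S)
    qed
    then show "x b = vsum (\<lambda>j. vscale (x (P 1 j)) (pv 1 j)) {j. 0 < j \<and> 3 dvd j \<and> j \<le> 3 * k} b"
      using rhs by (simp add: Js_def)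
  qed
qed

end
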